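(* Let $t,b,k$ be positive integers with $4\le k\le t$ and $\ell=bk/(t(t-1))$ an integer, and let $d^*$ be a circular design neighbor-balanced at distances 1 and 2 in $\Omega_{(t,b,k)}$. Then under model $(\mathcal{M}2)$ the information matrix for the total effects $\psi=\tau+\lambda+\rho$ is $$C_{d^*}[\psi]=\frac{b(k-3)}{3(t-1)}\,Q_t,\qquad Q_t=I_t-t^{-1}J_t.$$
   Context: Designs: $t$ treatments, $b$ linear blocks; block $i$ has inner plots $j=1,\dots,k$ and border plots $j=0,k+1$; $d(i,j)$ is the treatment on plot $(i,j)$; circular means $d(i,0)=d(i,k)$, $d(i,k+1)=d(i,1)$. $\Omega_{(t,b,k)}$ is the set of circular designs with $t$ treatments and $b$ blocks of length $k$. $J_t$ is the $t\times t$ all-ones matrix. Model $(\mathcal{M}2)$: responses $Y_{i,j}$ ($1\le i\le b$, $1\le j\le k$) uncorrelated with common variance, $\mathbb{E}(Y_{i,j})=\beta_i+\tau_{d(i,j)}+\lambda_{d(i,j-1)}+\rho_{d(i,j+1)}$, i.e. $\mathbb{E}(Y)=B\beta+T_d\tau+L_d\lambda+R_d\rho$ with $B$ block incidence and $T_d,L_d,R_d$ ($bk\times t$) having a single $1$ in row $(i,j)$ at column $d(i,j)$, $d(i,j-1)$, $d(i,j+1)$ respectively. $\psi=K'\alpha$ with $\alpha=(\tau',\lambda',\rho')'$, $K=\mathbf 1_3\otimes I_t$. Information matrix: with $A=(T_d\mid L_d\mid R_d)$, $X^+$ the Moore–Penrose inverse, $\mathrm{pr}_{(X)}=X(X'X)^+X'$,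 $\mathrm{pr}^\perp_{(X)}=I-\mathrm{pr}_{(X)}$, $M=I-K(K'K)^+K'$, $X_1=AK(K'K)^+$, $X_2=(AM\mid B)$: $C_d[\psi]=X_1'\mathrm{pr}^\perp_{(X_2)}X_1$. CNBD: a design in $\Omega_{(t,b,k)}$ that is binary (each treatment at most once among the inner plots of each block), a balanced block design (equal replication and each unordered pair of distinct treatments together in the same number of blocks), and such that for each ordered pair $(a,c)$ of distinct treatments exactly $\ell$ inner plots $(i,j)$ have $d(i,j)=a$, $d(i,j+1)=c$. A CNBD2 (circular design neighbor-balanced at distances 1 and 2) is a CNBD such that moreover for each ordered pair $(a,c)$ of distinct treatments exactly $\ell$ inner plots $(i,j)$ have $d(i,j-1)=a$ and $d(i,j+1)=c$. *)

theory Defs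
  imports Complex_Main "Jordan_Normal_Form.Matrix"
begin

text \<open>Treatments are 0..t-1, blocks 0..b-1, inner plots of a block 0..k-1 (0-indexed).
  A design is d :: nat => nat => nat, d i j being the treatment on inner plot j of block i.
  Circularity: the left border plot of block i carries d i (k-1) and the right border
  plot carries d i 0, so the left neighbour of inner plot j is plot (j+k-1) mod k and
  the right neighbour is plot (j+1) mod k.\<close>

definition lnb :: "nat \<Rightarrow> nat \<Rightarrow> nat" where
  "lnb k j = (j + k - 1) mod k"

definition rnb :: "nat \<Rightarrow> nat \<Rightarrow> nat" where
  "rnb k j = (j + 1) mod k"

definition circ_design :: "nat \<Rightarrow> nat \<Rightarrow> nat \<Rightarrow> (nat \<Rightarrow> nat \<Rightarrow> nat) \<Rightarrow> bool" where
  "circ_design t b k d \<longleftrightarrow> (\<forall>i<b. \<forall>j<k. d i j < t)"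

definition binary_design :: "nat \<Rightarrow> nat \<Rightarrow> (nat \<Rightarrow> nat \<Rightarrow> nat) \<Rightarrow> bool" where
  "binary_design b k d \<longleftrightarrow> (\<forall>i<b. inj_on (d i) {..<k})"

definition balanced_block_design :: "nat \<Rightarrow> nat \<Rightarrow> nat \<Rightarrow> (nat \<Rightarrow> nat \<Rightarrow> nat) \<Rightarrow> bool" where
  "balanced_block_design t b k d \<longleftrightarrow>
     (\<exists>r. \<forall>a<t. card {(i, j). i < b \<and> j < k \<and> d i j = a} = r) \<and>
     (\<exists>lam. \<forall>a<t. \<forall>c<t. a \<noteq> c \<longrightarrow>
        card {i. i < b \<and> a \<in> d i ` {..<k} \<and> c \<in> d i ` {..<k}} = lam)"

definition CNBD :: "nat \<Rightarrow> nat \<Rightarrow> nat \<Rightarrow> nat \<Rightarrow> (nat \<Rightarrow> nat \<Rightarrow> nat) \<Rightarrow> bool" where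
  "CNBD t b k l d \<longleftrightarrow> circ_design t b k d \<and> binary_design b k d \<and>
     balanced_block_design t b k d \<and>
     (\<forall>a<t. \<forall>c<t. a \<noteq> c \<longrightarrow>
        card {(i, j). i < b \<and> j < k \<and> d i j = a \<and> d i (rnb k j) = c} = l)"

definition CNBD2 :: "nat \<Rightarrow> nat \<Rightarrow> nat \<Rightarrow> nat \<Rightarrow> (nat \<Rightarrow> nat \<Rightarrow> nat) \<Rightarrow> bool" where
  "CNBD2 t b k l d \<longleftrightarrow> CNBD t b k l d \<and>
     (\<forall>a<t. \<forall>c<t. a \<noteq> c \<longrightarrow>
        card {(i, j). i < b \<and> j < k \<and> d i (lnb k j) = a \<and> d i (rnb k j) = c} = l)"

definition mp_inverse :: "real mat \<Rightarrow> real mat" where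
  "mp_inverse A = (THE X. X \<in> carrier_mat (dim_col A) (dim_row A) \<and>
      A * X * A = A \<and> X * A * X = X \<and>
      transpose_mat (A * X) = A * X \<and> transpose_mat (X * A) = X * A)"

definition proj_mat :: "real mat \<Rightarrow> real mat" where
  "proj_mat X = X * mp_inverse (transpose_mat X * X) * transpose_mat X"

definition proj_perp :: "real mat \<Rightarrow> real mat" where
  "proj_perp X = 1\<^sub>m (dim_row X) - proj_mat X"

definition hcat :: "real mat \<Rightarrow> real mat \<Rightarrow> real mat" where
  "hcat X Y = mat (dim_row X) (dim_col X + dim_col Y)
     (\<lambda>(r, c). if c < dim_col X then X $$ (r, c) else Y $$ (r, c - dim_col X))"

text \<open>Rows are indexed by plots: plot (i,j) is row i*k+j.\<close>
definition T_mat :: "nat \<Rightarrow> nat \<Rightarrow> nat \<Rightarrow> (nat \<Rightarrow> nat \<Rightarrow> nat) \<Rightarrow> real mat" where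
  "T_mat t b k d = mat (b * k) t (\<lambda>(r, c). if d (r div k) (r mod k) = c then 1 else 0)"

definition L_mat :: "nat \<Rightarrow> nat \<Rightarrow> nat \<Rightarrow> (nat \<Rightarrow> nat \<Rightarrow> nat) \<Rightarrow> real mat" where
  "L_mat t b k d = mat (b * k) t (\<lambda>(r, c). if d (r div k) (lnb k (r mod k)) = c then 1 else 0)"

definition R_mat :: "nat \<Rightarrow> nat \<Rightarrow> nat \<Rightarrow> (nat \<Rightarrow> nat \<Rightarrow> nat) \<Rightarrow> real mat" where
  "R_mat t b k d = mat (b * k) t (\<lambda>(r, c). if d (r div k) (rnb k (r mod k)) = c then 1 else 0)"

definition B_mat :: "nat \<Rightarrow> nat \<Rightarrow> real mat" where
  "B_mat b k = mat (b * k) b (\<lambda>(r, c). if r div k = c then 1 else 0)"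

text \<open>K = 1_3 (Kronecker) I_t.\<close>
definition K_mat :: "nat \<Rightarrow> real mat" where
  "K_mat t = mat (3 * t) t (\<lambda>(r, c). if r mod t = c then 1 else 0)"

definition A_mat :: "nat \<Rightarrow> nat \<Rightarrow> nat \<Rightarrow> (nat \<Rightarrow> nat \<Rightarrow> nat) \<Rightarrow> real mat" where
  "A_mat t b k d = hcat (T_mat t b k d) (hcat (L_mat t b k d) (R_mat t b k d))"

definition M_mat :: "nat \<Rightarrow> real mat" where
  "M_mat t = 1\<^sub>m (3 * t) - K_mat t * mp_inverse (transpose_mat (K_mat t) * K_mat t) * transpose_mat (K_mat t)"

text \<open>Information matrix for psi = K' alpha under model (M2).\<close>
definition info_mat :: "nat \<Rightarrow> nat \<Rightarrow> nat \<Rightarrow> (nat \<Rightarrow> nat \<Rightarrow> nat) \<Rightarrow> real mat" where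
  "info_mat t b k d =
    (let A = A_mat t b k d; K = K_mat t;
         X1 = A * K * mp_inverse (transpose_mat K * K);
         X2 = hcat (A * M_mat t) (B_mat b k)
     in transpose_mat X1 * proj_perp X2 * X1)"

definition J_mat :: "nat \<Rightarrow> real mat" where
  "J_mat t = mat t t (\<lambda>_. 1)"

end

theory Submission
  imports Defs
begin

definition penrose :: "real mat \<Rightarrow> real mat \<Rightarrow> bool" where
  "penrose A X \<longleftrightarrow> A * X * A = A \<and> X * A * X = X \<and>
      transpose_mat (A * X) = A * X \<and> transpose_mat (X * A) = X * A"

lemma penrose_unique:
  assumes A: "A \<in> carrier_mat n m" and X: "X \<in> carrier_mat m n" and Y: "Y \<in> carrier_mat m n"
    and pX: "penrose A X" and pY: "penrose A Y"
  shows "X = Y"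
proof -
  have x1: "A * X * A = A" "X * A * X = X" "transpose_mat (A * X) = A * X" "transpose_mat (X * A) = X * A"
    using pX unfolding penrose_def by auto
  have y1: "A * Y * A = A" "Y * A * Y = Y" "transpose_mat (A * Y) = A * Y" "transpose_mat (Y * A) = Y * A"
    using pY unfolding penrose_def by auto
  have AT1: "transpose_mat A = transpose_mat A * (A * Y)"
  proof -
    have "transpose_mat A = transpose_mat ((A * Y) * A)" using y1 by simp
    also have "\<dots> = transpose_mat A * transpose_mat (A * Y)" using A Y by (intro transpose_mult[of _ n n]) auto
    finally show ?thesis using y1 by simp
  qed
  have AT2: "transpose_mat A = (X * A) * transpose_mat A"
  proof -
    have "transpose_mat A = transpose_mat (A * (X * A))" using x1 A X by simp
    also have "\<dots> = transpose_mat (X * A) * transpose_mat A" using A X by (intro transpose_mult[of _ n m]) auto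
    finally show ?thesis using x1 by simp
  qed
  have tAX: "transpose_mat X * transpose_mat A = A * X"
    using x1(3) transpose_mult[OF A X] by simp
  have tYA: "transpose_mat A * transpose_mat Y = Y * A"
    using y1(4) transpose_mult[OF Y A] by simp
  have xr: "X * (A * (X * W)) = X * W" if W: "W \<in> carrier_mat n q" for W q
  proof -
    have e1: "X * (A * X) * W = X * ((A * X) * W)"
      by (rule assoc_mult_mat[of _ m n _ n _ q]) (use A X W in auto)
    have e2: "(A * X) * W = A * (X * W)"
      by (rule assoc_mult_mat[of _ n m _ n _ q]) (use A X W in auto)
    have "X * (A * X) = X" using x1 A X by simp
    then show ?thesis using e1 e2 by simp
  qed
  have s1: "transpose_mat X * (transpose_mat A * W) = A * (X * W)" if W: "W \<in> carrier_mat n q" for W q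
  proof -
    have "transpose_mat X * (transpose_mat A * W) = (transpose_mat X * transpose_mat A) * W"
      using A X W by simp
    also have "\<dots> = A * (X * W)" using tAX A X W by simp
    finally show ?thesis .
  qed
  have "X = X * (A * X)" using x1 A X by simp
  also have "\<dots> = X * (transpose_mat X * transpose_mat A)" using tAX by simp
  also have "\<dots> = X * (transpose_mat X * (transpose_mat A * (A * Y)))" using AT1 by simp
  also have "\<dots> = X * (A * (X * (A * Y)))" using s1[of "A * Y" n] A Y by simp
  also have "\<dots> = X * (A * Y)" using xr[of "A * Y" n] A Y by simp
  finally have eX: "X = X * (A * Y)" .
  have s2: "transpose_mat A * (transpose_mat Y * Y) = Y"
  proof -
    have "transpose_mat A * (transpose_mat Y * Y) = (transpose_mat A * transpose_mat Y) * Y"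
      using A Y by simp
    also have "\<dots> = Y" using tYA y1 by simp
    finally show ?thesis .
  qed
  have "Y = (X * A) * transpose_mat A * (transpose_mat Y * Y)" using AT2 s2 by simp
  also have "\<dots> = X * (A * (transpose_mat A * (transpose_mat Y * Y)))"
  proof -
    have W: "transpose_mat Y * Y \<in> carrier_mat n n" using Y by auto
    have e0: "(X * A) * transpose_mat A = X * (A * transpose_mat A)"
      by (rule assoc_mult_mat[of _ m n _ m _ n]) (use A X in auto)
    have e1: "X * (A * transpose_mat A) * (transpose_mat Y * Y) = X * ((A * transpose_mat A) * (transpose_mat Y * Y))"
      by (rule assoc_mult_mat[of _ m n _ n _ n]) (use A X W in auto)
    have e2: "(A * transpose_mat A) * (transpose_mat Y * Y) = A * (transpose_mat A * (transpose_mat Y * Y))"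
      by (rule assoc_mult_mat[of _ n m _ n _ n]) (use A W in auto)
    show ?thesis using e0 e1 e2 by simp
  qed
  also have "\<dots> = X * (A * Y)" using s2 by simp
  finally show ?thesis using eX by simp
qed

lemma mp_inverse_eqI:
  assumes A: "A \<in> carrier_mat n m" and X: "X \<in> carrier_mat m n" and pX: "penrose A X"
  shows "mp_inverse A = X"
  unfolding mp_inverse_def
proof (rule the_equality)
  show "X \<in> carrier_mat (dim_col A) (dim_row A) \<and> A * X * A = A \<and> X * A * X = X \<and>
      transpose_mat (A * X) = A * X \<and> transpose_mat (X * A) = X * A"
    using A X pX unfolding penrose_def by auto
next
  fix Y assume "Y \<in> carrier_mat (dim_col A) (dim_row A) \<and> A * Y * A = A \<and> Y * A * Y = Y \<and>
      transpose_mat (A * Y) = A * Y \<and> transpose_mat (Y * A) = Y * A"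
  then show "Y = X" using penrose_unique[OF A _ X _ pX, of Y] A unfolding penrose_def by auto
qed

lemma gram_zero:
  fixes W :: "real mat"
  assumes W: "W \<in> carrier_mat n m" and z: "transpose_mat W * W = 0\<^sub>m m m"
  shows "W = 0\<^sub>m n m"
proof (rule eq_matI)
  fix i j assume i: "i < dim_row (0\<^sub>m n m :: real mat)" and j: "j < dim_col (0\<^sub>m n m :: real mat)"
  have "(transpose_mat W * W) $$ (j, j) = 0" using z j by simp
  hence "(\<Sum>r\<in>{0..<n}. (W $$ (r, j))^2) = 0"
    using W j by (simp add: scalar_prod_def power2_eq_square)
  hence "\<forall>r\<in>{0..<n}. (W $$ (r, j))^2 = 0"
    by (subst (asm) sum_nonneg_eq_0_iff) auto
  thus "W $$ (i, j) = 0\<^sub>m n m $$ (i, j)" using i j by simp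
qed (use W in auto)

lemma proj_fix:
  fixes X Z :: "real mat"
  assumes X: "X \<in> carrier_mat n m" and Z: "Z \<in> carrier_mat m m"
    and g: "(transpose_mat X * X) * Z * (transpose_mat X * X) = transpose_mat X * X"
  shows "X * Z * transpose_mat X * X = X"
proof -
  define G where "G = transpose_mat X * X"
  have G: "G \<in> carrier_mat m m" using X unfolding G_def by auto
  have g': "G * (Z * G) = G" using g G Z unfolding G_def[symmetric] by simp
  define V where "V = Z * G - 1\<^sub>m m"
  have V: "V \<in> carrier_mat m m" using G Z unfolding V_def by auto
  define W where "W = X * V"
  have W: "W \<in> carrier_mat n m" using X V unfolding W_def by auto
  have "transpose_mat X * W = G * V" using X V unfolding W_def G_def by simp
  also have "\<dots> = G * (Z * G) - G * 1\<^sub>m m"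
    unfolding V_def using G Z by (intro mult_minus_distrib_mat[of _ m m]) auto
  also have "\<dots> = 0\<^sub>m m m" using g' G by simp
  finally have XW: "transpose_mat X * W = 0\<^sub>m m m" .
  have "transpose_mat W * W = (transpose_mat V * transpose_mat X) * W"
    unfolding W_def using X V by (metis transpose_mult)
  also have "\<dots> = transpose_mat V * (transpose_mat X * W)" using X V W by simp
  also have "\<dots> = 0\<^sub>m m m" using XW V by simp
  finally have "W = 0\<^sub>m n m" using gram_zero[OF W] by simp
  hence h: "X * (Z * G) - X * 1\<^sub>m m = 0\<^sub>m n m" unfolding W_def V_def using X Z G
    by (subst mult_minus_distrib_mat[symmetric, of _ n m]) auto
  have "X * (Z * G) = X"
  proof (rule eq_matI)
    fix i j assume ij: "i < dim_row X" "j < dim_col X"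
    have "(X * (Z * G) - X * 1\<^sub>m m) $$ (i, j) = 0" using h ij X by simp
    thus "(X * (Z * G)) $$ (i, j) = X $$ (i, j)" using ij X Z G by simp
  qed (use X Z G in auto)
  moreover have "X * Z * transpose_mat X * X = X * Z * (transpose_mat X * X)"
    using X Z by (intro assoc_mult_mat[of _ n m _ n _ m]) auto
  moreover have "X * Z * (transpose_mat X * X) = X * (Z * (transpose_mat X * X))"
    using X Z by (intro assoc_mult_mat[of _ n m _ m _ m]) auto
  ultimately show ?thesis unfolding G_def by simp
qed


lemma sum_add_split: "(\<Sum>s<m+n. f s) = (\<Sum>s<m. f s) + (\<Sum>v<n. f (m+v)) "
  for f :: "nat \<Rightarrow> real"
  by (induction n) (auto simp: add.assoc)

lemma sum_mult_split: "(\<Sum>s<m*n. f s) = (\<Sum>u<m. \<Sum>v<n. f (u*n+v))"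
  for f :: "nat \<Rightarrow> real"
proof (induction m)
  case 0 then show ?case by simp
next
  case (Suc m)
  have "(\<Sum>s<Suc m * n. f s) = (\<Sum>s<m*n + n. f s)" by (simp add: add.commute)
  also have "\<dots> = (\<Sum>s<m*n. f s) + (\<Sum>v<n. f (m*n+v))" by (rule sum_add_split)
  finally show ?case using Suc by simp
qed

definition ind :: "bool \<Rightarrow> real" where "ind P = (if P then 1 else 0)"

lemma ind_simps[simp]: "ind True = 1" "ind False = 0" "ind P * ind P = ind P" "ind P * ind Q = ind (P \<and> Q)"
  by (auto simp: ind_def)

lemma sum_ind_eq: "x < t \<Longrightarrow> (\<Sum>a<t. ind (x = a)) = 1" for t :: nat
  unfolding ind_def by simp

lemma sum_ind_eq': "x < t \<Longrightarrow> (\<Sum>a<t. ind (x = a) * f a) = f x" for t :: nat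
proof -
  assume "x < t"
  have "(\<Sum>a<t. ind (x=a) * f a) = (\<Sum>a<t. if x = a then f a else 0)" by (rule sum.cong) (auto simp: ind_def)
  then show ?thesis using \<open>x < t\<close> by simp
qed

lemma card_filter_ind: "finite A \<Longrightarrow> real (card {x \<in> A. P x}) = (\<Sum>x\<in>A. ind (P x))"
proof -
  assume fin: "finite A"
  have "(\<Sum>x\<in>A. if P x then 1 else 0::real) = (\<Sum>x\<in>{x\<in>A. P x}. 1)"
    by (rule sum.inter_filter[symmetric, OF fin])
  also have "\<dots> = real (card {x \<in> A. P x})" by simp
  finally show ?thesis unfolding ind_def by simp
qed

lemma card_pairs: "real (card {(i, j). i < b \<and> j < k \<and> P i j}) = (\<Sum>i<b. \<Sum>j<k. ind (P i j))"
  for b k :: nat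
proof -
  have e: "{(i, j). i < b \<and> j < k \<and> P i j} = {x \<in> {..<b} \<times> {..<k}. P (fst x) (snd x)}" by auto
  have "real (card {x \<in> {..<b} \<times> {..<k}. P (fst x) (snd x)}) = (\<Sum>x\<in>{..<b} \<times> {..<k}. ind (P (fst x) (snd x)))"
    by (rule card_filter_ind) simp
  also have "\<dots> = (\<Sum>i<b. \<Sum>j<k. ind (P i j))"
    by (subst sum.cartesian_product) (simp add: case_prod_beta)
  finally show ?thesis using e by simp
qed

lemma card_set_ind: "real (card {i. i < b \<and> P i}) = (\<Sum>i<b. ind (P i))" for b :: nat
proof -
  have "real (card {i \<in> {..<b}. P i}) = (\<Sum>i<b. ind (P i))" by (rule card_filter_ind) simp
  then show ?thesis by (simp add: lessThan_def)
qed

lemma rnb_lt: "0 < k \<Longrightarrow> rnb k j < k" unfolding rnb_def by simp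
lemma lnb_lt: "0 < k \<Longrightarrow> lnb k j < k" unfolding lnb_def by simp
lemma lnb_rnb: "j < k \<Longrightarrow> lnb k (rnb k j) = j"
  unfolding lnb_def rnb_def
  by (cases "j + 1 = k") (auto simp: mod_Suc_eq)
lemma rnb_lnb: assumes "j < k" shows "rnb k (lnb k j) = j"
proof (cases j)
  case 0 with assms show ?thesis by (simp add: lnb_def rnb_def)
next
  case (Suc j') note jk = assms
  then have "(j + k - 1) mod k = j'" using Suc by simp
  then have "lnb k j = j'" by (simp add: lnb_def)
  then show ?thesis using Suc jk by (simp add: lnb_def rnb_def)
qed
lemma bij_rnb: "0 < k \<Longrightarrow> bij_betw (rnb k) {..<k} {..<k}"
  by (rule bij_betw_byWitness[where f'="lnb k"]) (auto simp: lnb_rnb rnb_lnb rnb_lt lnb_lt)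
lemma bij_lnb: "0 < k \<Longrightarrow> bij_betw (lnb k) {..<k} {..<k}"
  by (rule bij_betw_byWitness[where f'="rnb k"]) (auto simp: lnb_rnb rnb_lnb rnb_lt lnb_lt)
lemma rnb_ne: "1 < k \<Longrightarrow> j < k \<Longrightarrow> rnb k j \<noteq> j"
  unfolding rnb_def by (cases "j + 1 = k") auto
lemma lnb_ne: "1 < k \<Longrightarrow> j < k \<Longrightarrow> lnb k j \<noteq> j"
  by (metis rnb_lnb rnb_ne)
lemma lnb_ne_rnb: "2 < k \<Longrightarrow> j < k \<Longrightarrow> lnb k j \<noteq> rnb k j"
proof
  assume a: "2 < k" "j < k" "lnb k j = rnb k j"
  then have "j = rnb k (rnb k j)" by (metis rnb_lnb)
  also have "\<dots> = (j + 2) mod k" unfolding rnb_def by (simp add: mod_Suc_eq)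
  finally show False using a by (cases "j + 2 < k") (auto simp: le_mod_geq)
qed


locale des =
  fixes t b k l :: nat and d :: "nat \<Rightarrow> nat \<Rightarrow> nat"
  assumes t0: "0 < t" and b0: "0 < b" and k0: "0 < k" and k4: "4 \<le> k" and kt: "k \<le> t"
    and ltbk: "l * (t * (t - 1)) = b * k" and cn: "CNBD2 t b k l d"
begin

definition pos :: "nat \<Rightarrow> nat \<Rightarrow> nat" where
  "pos u j = (if u = 0 then j else if u = 1 then lnb k j else rnb k j)"
definition NN :: "nat \<Rightarrow> nat \<Rightarrow> real" where "NN a i = ind (a \<in> d i ` {..<k})"
definition r0 :: real where "r0 = real l * (real t - 1)"
definition gg :: "nat \<Rightarrow> nat \<Rightarrow> nat \<Rightarrow> nat \<Rightarrow> real" where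
  "gg u v a c = (if u = v then (if a = c then r0 else 0) else (if a = c then 0 else real l))"
definition SS :: "nat \<Rightarrow> nat \<Rightarrow> nat \<Rightarrow> nat \<Rightarrow> real" where
  "SS u v a c = (\<Sum>i<b. \<Sum>j<k. ind (d i (pos u j) = a) * ind (d i (pos v j) = c))"

lemma dlt: "i < b \<Longrightarrow> j < k \<Longrightarrow> d i j < t"
  using cn unfolding CNBD2_def CNBD_def circ_design_def by auto
lemma dinj: "i < b \<Longrightarrow> inj_on (d i) {..<k}"
  using cn unfolding CNBD2_def CNBD_def binary_design_def by auto
lemma cnt1: "a < t \<Longrightarrow> c < t \<Longrightarrow> a \<noteq> c \<Longrightarrow>
   card {(i, j). i < b \<and> j < k \<and> d i j = a \<and> d i (rnb k j) = c} = l"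
  using cn unfolding CNBD2_def CNBD_def by auto
lemma cnt2: "a < t \<Longrightarrow> c < t \<Longrightarrow> a \<noteq> c \<Longrightarrow>
   card {(i, j). i < b \<and> j < k \<and> d i (lnb k j) = a \<and> d i (rnb k j) = c} = l"
  using cn unfolding CNBD2_def by auto
lemma bal: "balanced_block_design t b k d"
  using cn unfolding CNBD2_def CNBD_def by auto

lemma pos_lt: "j < k \<Longrightarrow> pos u j < k"
  using k0 unfolding pos_def by (auto simp: lnb_lt rnb_lt)

lemma pos_ne: "u < 3 \<Longrightarrow> v < 3 \<Longrightarrow> u \<noteq> v \<Longrightarrow> j < k \<Longrightarrow> pos u j \<noteq> pos v j"
  using k4 lnb_ne[of k j] rnb_ne[of k j] lnb_ne_rnb[of k j] unfolding pos_def
  by (auto simp: less_Suc_eq numeral_3_eq_3)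

lemma sum_rnb: "(\<Sum>j<k. F (rnb k j)) = (\<Sum>j<k. F j)"
  using sum.reindex_bij_betw[OF bij_rnb[OF k0]] by simp
lemma sum_lnb: "(\<Sum>j<k. F (lnb k j)) = (\<Sum>j<k. F j)"
  using sum.reindex_bij_betw[OF bij_lnb[OF k0]] by simp

lemma sum_pos: "(\<Sum>j<k. F (pos u j)) = (\<Sum>j<k. F j)"
  unfolding pos_def using sum_rnb[of F] sum_lnb[of F] by (cases "u = 0"; cases "u = 1") auto

lemma row_count: assumes i: "i < b" shows "(\<Sum>j<k. ind (d i j = a)) = NN a i"
proof -
  have "(\<Sum>j<k. ind (d i j = a)) = real (card {j. j < k \<and> d i j = a})"
    by (simp add: card_set_ind)
  also have "\<dots> = NN a i"
  proof (cases "a \<in> d i ` {..<k}")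
    case True
    then obtain j0 where j0: "j0 < k" "d i j0 = a" by auto
    have "{j. j < k \<and> d i j = a} = {j0}"
      using j0 dinj[OF i] unfolding inj_on_def by auto
    then show ?thesis using True by (simp add: NN_def)
  next
    case False
    then have "{j. j < k \<and> d i j = a} = {}" by auto
    then show ?thesis using False by (simp add: NN_def)
  qed
  finally show ?thesis .
qed

lemma row_count_pos: "i < b \<Longrightarrow> (\<Sum>j<k. ind (d i (pos u j) = a)) = NN a i"
  using sum_pos[of "\<lambda>j. ind (d i j = a)"] row_count by simp

lemma colsum: assumes i: "i < b" shows "(\<Sum>a<t. NN a i) = real k"
proof -
  have "(\<Sum>a<t. NN a i) = (\<Sum>a<t. \<Sum>j<k. ind (d i j = a))" using row_count[OF i] by simp
  also have "\<dots> = (\<Sum>j<k. \<Sum>a<t. ind (d i j = a))" by (rule sum.swap)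
  also have "\<dots> = (\<Sum>j<k. 1)" using dlt[OF i] by (intro sum.cong) (auto simp: sum_ind_eq)
  finally show ?thesis by simp
qed

lemma t1: "1 < t" using k4 kt by simp

lemma rep: assumes a: "a < t" shows "(\<Sum>i<b. NN a i) = r0"
proof -
  obtain r where r: "\<And>a. a < t \<Longrightarrow> card {(i, j). i < b \<and> j < k \<and> d i j = a} = r"
    using bal unfolding balanced_block_design_def by blast
  have rs: "\<And>a. a < t \<Longrightarrow> (\<Sum>i<b. NN a i) = real r"
  proof -
    fix a assume "a < t"
    have "real r = (\<Sum>i<b. \<Sum>j<k. ind (d i j = a))" using r[OF \<open>a < t\<close>] card_pairs[of b k "\<lambda>i j. d i j = a"] by simp
    also have "\<dots> = (\<Sum>i<b. NN a i)" using row_count by simp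
    finally show "(\<Sum>i<b. NN a i) = real r" by simp
  qed
  have "real t * real r = (\<Sum>a<t. \<Sum>i<b. NN a i)" using rs by simp
  also have "\<dots> = (\<Sum>i<b. \<Sum>a<t. NN a i)" by (rule sum.swap)
  also have "\<dots> = real b * real k" using colsum by simp
  also have "\<dots> = real l * (real t * (real t - 1))" using ltbk t1
    by (metis of_nat_1 of_nat_diff of_nat_le_iff of_nat_mult less_imp_le)
  finally have "real r = real l * (real t - 1)" using t0 by (simp add: mult.commute mult.left_commute)
  then show ?thesis using rs[OF a] unfolding r0_def by simp
qed

end

context des begin

lemma NN_sq: "NN a i * NN a i = NN a i" by (simp add: NN_def)

lemma lam: assumes a: "a < t" and c: "c < t" and ac: "a \<noteq> c"
  shows "(\<Sum>i<b. NN a i * NN c i) = real l * (real k - 1)"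
proof -
  obtain lam where lm: "\<And>a c. a < t \<Longrightarrow> c < t \<Longrightarrow> a \<noteq> c \<Longrightarrow>
        card {i. i < b \<and> a \<in> d i ` {..<k} \<and> c \<in> d i ` {..<k}} = lam"
    using bal unfolding balanced_block_design_def by blast
  have ls: "\<And>c. c < t \<Longrightarrow> a \<noteq> c \<Longrightarrow> (\<Sum>i<b. NN a i * NN c i) = real lam"
  proof -
    fix c assume "c < t" "a \<noteq> c"
    have "real lam = (\<Sum>i<b. ind (a \<in> d i ` {..<k} \<and> c \<in> d i ` {..<k}))"
      using lm[OF a \<open>c < t\<close> \<open>a \<noteq> c\<close>] card_set_ind[of b "\<lambda>i. a \<in> d i ` {..<k} \<and> c \<in> d i ` {..<k}"] by simp
    then show "(\<Sum>i<b. NN a i * NN c i) = real lam" by (simp add: NN_def)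
  qed
  have "(\<Sum>c<t. \<Sum>i<b. NN a i * NN c i) = (\<Sum>i<b. \<Sum>c<t. NN a i * NN c i)" by (rule sum.swap)
  also have "\<dots> = (\<Sum>i<b. NN a i * real k)" by (simp add: sum_distrib_left[symmetric] colsum)
  also have "\<dots> = r0 * real k" using rep[OF a] by (simp add: sum_distrib_right[symmetric])
  finally have tot: "(\<Sum>c<t. \<Sum>i<b. NN a i * NN c i) = r0 * real k" .
  have "(\<Sum>c<t. \<Sum>i<b. NN a i * NN c i) = (\<Sum>i<b. NN a i * NN a i) + (\<Sum>c\<in>{..<t} - {a}. \<Sum>i<b. NN a i * NN c i)"
    using a by (subst sum.remove[of _ a]) auto
  also have "\<dots> = r0 + (\<Sum>c\<in>{..<t} - {a}. real lam)"
    using ls rep[OF a] by (simp add: NN_sq)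
  also have "\<dots> = r0 + (real t - 1) * real lam" using a by (simp add: of_nat_diff)
  finally have "r0 + (real t - 1) * real lam = r0 * real k" using tot by simp
  then have "(real t - 1) * real lam = (real t - 1) * (real l * (real k - 1))"
    unfolding r0_def by (simp add: algebra_simps)
  then have "real lam = real l * (real k - 1)" using t1 by simp
  then show ?thesis using ls[OF c ac] by simp
qed

lemma SS_comm: "SS u v a c = SS v u c a"
  unfolding SS_def by (simp add: mult.commute)

lemma SS_eq: assumes "a < t" "c < t" shows "SS u u a c = (if a = c then r0 else 0)"
proof (cases "a = c")
  case True
  then have "SS u u a c = (\<Sum>i<b. \<Sum>j<k. ind (d i (pos u j) = a))" unfolding SS_def by simp
  also have "\<dots> = (\<Sum>i<b. NN a i)" using row_count_pos by simp
  finally show ?thesis using rep assms True by simp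
next
  case False
  have z: "\<And>x. ind (x = a) * ind (x = c) = 0" using False by (auto simp: ind_def)
  have "SS u u a c = 0" unfolding SS_def by (simp only: z sum.neutral_const)
  then show ?thesis using False by simp
qed

lemma SS_same: assumes "u < 3" "v < 3" "u \<noteq> v" shows "SS u v a a = 0"
proof -
  have "\<And>i j. i < b \<Longrightarrow> j < k \<Longrightarrow> ind (d i (pos u j) = a) * ind (d i (pos v j) = a) = 0"
  proof -
    fix i j assume ij: "i < b" "j < k"
    have "d i (pos u j) \<noteq> d i (pos v j)"
      using dinj[OF ij(1)] pos_ne[OF assms ij(2)] pos_lt[OF ij(2)] unfolding inj_on_def by blast
    then show "ind (d i (pos u j) = a) * ind (d i (pos v j) = a) = 0" by (auto simp: ind_def)
  qed
  then show ?thesis unfolding SS_def by simp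
qed

lemma E1: "a < t \<Longrightarrow> c < t \<Longrightarrow> a \<noteq> c \<Longrightarrow>
   (\<Sum>i<b. \<Sum>j<k. ind (d i j = a) * ind (d i (rnb k j) = c)) = real l"
  using cnt1 card_pairs[of b k "\<lambda>i j. d i j = a \<and> d i (rnb k j) = c"] by simp

lemma E2: "a < t \<Longrightarrow> c < t \<Longrightarrow> a \<noteq> c \<Longrightarrow>
   (\<Sum>i<b. \<Sum>j<k. ind (d i (lnb k j) = a) * ind (d i (rnb k j) = c)) = real l"
  using cnt2 card_pairs[of b k "\<lambda>i j. d i (lnb k j) = a \<and> d i (rnb k j) = c"] by simp

lemma SS02: "a < t \<Longrightarrow> c < t \<Longrightarrow> a \<noteq> c \<Longrightarrow> SS 0 2 a c = real l"
  unfolding SS_def pos_def using E1 by simp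
lemma SS12: "a < t \<Longrightarrow> c < t \<Longrightarrow> a \<noteq> c \<Longrightarrow> SS 1 2 a c = real l"
  unfolding SS_def pos_def using E2 by simp
lemma SS01: assumes "a < t" "c < t" "a \<noteq> c" shows "SS 0 1 a c = real l"
proof -
  have "SS 0 1 a c = (\<Sum>i<b. \<Sum>j<k. ind (d i j = a) * ind (d i (lnb k j) = c))"
    unfolding SS_def pos_def by simp
  also have "\<dots> = (\<Sum>i<b. \<Sum>j<k. ind (d i (rnb k j) = a) * ind (d i (lnb k (rnb k j)) = c))"
    by (subst sum_rnb[symmetric]) simp
  also have "\<dots> = (\<Sum>i<b. \<Sum>j<k. ind (d i j = c) * ind (d i (rnb k j) = a))"
    by (intro sum.cong refl) (simp add: lnb_rnb mult.commute)
  also have "\<dots> = real l" using E1 assms by simp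
  finally show ?thesis .
qed

lemma SS_diff: assumes "u < 3" "v < 3" "u \<noteq> v" "a < t" "c < t" "a \<noteq> c" shows "SS u v a c = real l"
proof -
  have "u = 0 \<and> v = 1 \<or> u = 0 \<and> v = 2 \<or> u = 1 \<and> v = 2 \<or> v = 0 \<and> u = 1 \<or> v = 0 \<and> u = 2 \<or> v = 1 \<and> u = 2"
    using assms(1-3) by auto
  then show ?thesis using SS01 SS02 SS12 SS_comm assms(4-6) by (metis)
qed

lemma SS_gg: assumes "u < 3" "v < 3" "a < t" "c < t" shows "SS u v a c = gg u v a c"
  unfolding gg_def using SS_eq SS_same SS_diff assms by auto

end

lemma bilin: "(\<Sum>r\<in>R. (\<Sum>u\<in>U. \<alpha> u * f u r) * (\<Sum>v\<in>V. \<beta> v * g v r)) =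
   (\<Sum>u\<in>U. \<Sum>v\<in>V. \<alpha> u * \<beta> v * (\<Sum>r\<in>R. f u r * g v r))" for \<alpha> :: "'a \<Rightarrow> real"
proof -
  have "(\<Sum>r\<in>R. (\<Sum>u\<in>U. \<alpha> u * f u r) * (\<Sum>v\<in>V. \<beta> v * g v r)) =
        (\<Sum>r\<in>R. \<Sum>u\<in>U. \<Sum>v\<in>V. \<alpha> u * \<beta> v * (f u r * g v r))"
    by (simp add: sum_product mult_ac)
  also have "\<dots> = (\<Sum>u\<in>U. \<Sum>r\<in>R. \<Sum>v\<in>V. \<alpha> u * \<beta> v * (f u r * g v r))" by (rule sum.swap)
  also have "\<dots> = (\<Sum>u\<in>U. \<Sum>v\<in>V. \<Sum>r\<in>R. \<alpha> u * \<beta> v * (f u r * g v r))"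
    by (simp add: sum.swap[of _ R])
  also have "\<dots> = (\<Sum>u\<in>U. \<Sum>v\<in>V. \<alpha> u * \<beta> v * (\<Sum>r\<in>R. f u r * g v r))"
    by (simp add: sum_distrib_left)
  finally show ?thesis .
qed

lemma lin: "(\<Sum>r\<in>R. (\<Sum>u\<in>U. \<alpha> u * f u r) * g r) = (\<Sum>u\<in>U. \<alpha> u * (\<Sum>r\<in>R. f u r * g r))"
  for \<alpha> :: "'a \<Rightarrow> real"
proof -
  have "(\<Sum>r\<in>R. (\<Sum>u\<in>U. \<alpha> u * f u r) * g r) = (\<Sum>r\<in>R. \<Sum>u\<in>U. \<alpha> u * (f u r * g r))"
    by (simp only: sum_distrib_right mult.assoc)
  also have "\<dots> = (\<Sum>u\<in>U. \<Sum>r\<in>R. \<alpha> u * (f u r * g r))" by (rule sum.swap)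
  finally show ?thesis by (simp add: sum_distrib_left)
qed

lemma divmod_eq: "v < t \<Longrightarrow> (u * t + v = q) = (u = q div t \<and> v = q mod t)" for t :: nat
  by (metis add.commute div_mult_self1 less_nat_zero_code mod_less mod_mult_self2 div_less mult.commute
      add_0 div_mult_mod_eq)

declare ind_simps(4)[simp del]

lemma ind_sym: "ind (a = b) = ind (b = a)" by (auto simp: ind_def)

lemma sum_ind_eqR: "y < t \<Longrightarrow> (\<Sum>a<t. ind (a = y)) = 1" for t :: nat
  unfolding ind_def by simp
lemma sum_ind_eqR': "x < t \<Longrightarrow> (\<Sum>a<t. ind (a = x) * f a) = f x" for t :: nat
proof -
  assume "x < t"
  have "(\<Sum>a<t. ind (a = x) * f a) = (\<Sum>a<t. if a = x then f a else 0)" by (rule sum.cong) (auto simp: ind_def)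
  then show ?thesis using \<open>x < t\<close> by simp
qed
lemma sum_ind_eqR'': "x < t \<Longrightarrow> (\<Sum>a<t. f a * ind (a = x)) = f x" for t :: nat
  using sum_ind_eqR'[of x t f] by (simp add: mult.commute)

lemma center_sum: assumes "x < n" "y < n"
  shows "(\<Sum>u<n. (ind (x = u) - 1 / real n) * (ind (u = y) - 1 / real n)) = ind (x = y) - 1 / real n"
proof -
  define c where "c = 1 / real n"
  have n: "real n > 0" using assms by simp
  have nc: "real n * (c * c) = c" unfolding c_def using n by (simp add: field_simps)
  have "(\<Sum>u<n. (ind (x = u) - c) * (ind (u = y) - c)) =
     (\<Sum>u<n. ind (x = u) * ind (u = y) - c * ind (x = u) - c * ind (u = y) + c * c)"
    by (intro sum.cong refl) (simp add: algebra_simps)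
  also have "\<dots> = (\<Sum>u<n. ind (x = u) * ind (u = y)) - c * (\<Sum>u<n. ind (x = u)) - c * (\<Sum>u<n. ind (u = y))
      + real n * (c * c)"
    by (simp add: sum.distrib sum_subtractf sum_distrib_left)
  also have "(\<Sum>u<n. ind (x = u) * ind (u = y)) = ind (x = y)"
    using assms sum_ind_eq'[of x n "\<lambda>u. ind (u = y)"] by simp
  also have "(\<Sum>u<n. ind (x = u)) = 1" using assms sum_ind_eq by simp
  also have "(\<Sum>u<n. ind (u = y)) = 1" using assms sum_ind_eqR[of y n] by simp
  finally show ?thesis using nc unfolding c_def by simp
qed

context des begin

definition hh :: "nat \<Rightarrow> nat \<Rightarrow> nat \<Rightarrow> real" where
  "hh u a r = ind (d (r div k) (pos u (r mod k)) = a)"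

lemma sum_rows: "(\<Sum>r<b*k. F r) = (\<Sum>i<b. \<Sum>j<k. F (i * k + j))" for F :: "nat \<Rightarrow> real"
  by (rule sum_mult_split)

lemma hh_ij: "j < k \<Longrightarrow> hh u a (i * k + j) = ind (d i (pos u j) = a)"
  unfolding hh_def using k0 by simp

lemma G1: assumes "u < 3" "v < 3" "a < t" "c < t"
  shows "(\<Sum>r<b*k. hh u a r * hh v c r) = gg u v a c"
  unfolding sum_rows using SS_gg[OF assms] unfolding SS_def by (simp add: hh_ij)

lemma G2: "(\<Sum>r<b*k. hh u a r * F (r div k)) = (\<Sum>i<b. NN a i * F i)"
proof -
  have "(\<Sum>r<b*k. hh u a r * F (r div k)) = (\<Sum>i<b. (\<Sum>j<k. ind (d i (pos u j) = a)) * F i)"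
    unfolding sum_rows using k0 by (simp add: hh_ij sum_distrib_right)
  also have "\<dots> = (\<Sum>i<b. NN a i * F i)" using row_count_pos by simp
  finally show ?thesis .
qed

lemma G3: "(\<Sum>r<b*k. F (r div k)) = real k * (\<Sum>i<b. F i)" for F :: "nat \<Rightarrow> real"
  unfolding sum_rows using k0 by (simp add: sum_distrib_left)

lemma hh_sum: "r < b * k \<Longrightarrow> (\<Sum>a<t. hh u a r) = 1"
proof -
  assume r: "r < b * k"
  have "r div k < b" using r by (simp add: less_mult_imp_div_less)
  moreover have "r mod k < k" using k0 by simp
  ultimately have "d (r div k) (pos u (r mod k)) < t" using dlt pos_lt by blast
  then show ?thesis unfolding hh_def using sum_ind_eq by blast
qed

end

context des begin

lemma n_pos: "0 < b * k" using b0 k0 by simp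

lemma hcat_dims: "dim_row (hcat X Y) = dim_row X" "dim_col (hcat X Y) = dim_col X + dim_col Y"
  unfolding hcat_def by simp_all

lemma hcat_entry: "i < dim_row X \<Longrightarrow> j < dim_col X + dim_col Y \<Longrightarrow>
   hcat X Y $$ (i, j) = (if j < dim_col X then X $$ (i, j) else Y $$ (i, j - dim_col X))"
  unfolding hcat_def by simp

lemma T_dims: "dim_row (T_mat t b k d) = b * k" "dim_col (T_mat t b k d) = t"
  unfolding T_mat_def by simp_all
lemma L_dims: "dim_row (L_mat t b k d) = b * k" "dim_col (L_mat t b k d) = t"
  unfolding L_mat_def by simp_all
lemma R_dims: "dim_row (R_mat t b k d) = b * k" "dim_col (R_mat t b k d) = t"
  unfolding R_mat_def by simp_all

lemma T_entry: "r < b * k \<Longrightarrow> c < t \<Longrightarrow> T_mat t b k d $$ (r, c) = hh 0 c r"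
  unfolding T_mat_def hh_def pos_def ind_def by simp
lemma L_entry: "r < b * k \<Longrightarrow> c < t \<Longrightarrow> L_mat t b k d $$ (r, c) = hh 1 c r"
  unfolding L_mat_def hh_def pos_def ind_def by simp
lemma R_entry: "r < b * k \<Longrightarrow> c < t \<Longrightarrow> R_mat t b k d $$ (r, c) = hh 2 c r"
  unfolding R_mat_def hh_def pos_def ind_def by simp

lemma A_dims: "dim_row (A_mat t b k d) = b * k" "dim_col (A_mat t b k d) = 3 * t"
  unfolding A_mat_def by (simp_all add: hcat_dims T_dims L_dims R_dims)

lemma A_carrier: "A_mat t b k d \<in> carrier_mat (b * k) (3 * t)"
  by (rule carrier_matI[OF A_dims])

lemma A_entry: assumes r: "r < b * k" and q: "q < 3 * t"
  shows "A_mat t b k d $$ (r, q) = hh (q div t) (q mod t) r"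
proof -
  have e: "A_mat t b k d $$ (r, q) = (if q < t then T_mat t b k d $$ (r, q) else
      (if q - t < t then L_mat t b k d $$ (r, q - t) else R_mat t b k d $$ (r, q - t - t)))"
    unfolding A_mat_def using r q by (simp add: hcat_entry hcat_dims T_dims L_dims R_dims)
  consider (a) "q < t" | (b) "t \<le> q" "q < 2 * t" | (c) "2 * t \<le> q" by linarith
  then show ?thesis
  proof cases
    case a
    then show ?thesis using e r by (simp add: T_entry)
  next
    case b
    then have "q div t = 1" "q mod t = q - t" using le_div_geq[of t q] le_mod_geq[of t q] t0 by auto
    moreover have "q - t < t" using b by linarith
    ultimately show ?thesis using e r b by (simp add: L_entry)
  next
    case c
    then have "q div t = 2" "q mod t = q - t - t"
      using le_div_geq[of t q] le_mod_geq[of t q] le_div_geq[of t "q - t"] le_mod_geq[of t "q - t"] t0 q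
      by (auto simp: numeral_2_eq_2)
    moreover have "q - t - t < t" "\<not> q - t < t" using c q by linarith+
    ultimately show ?thesis using e r c q by (simp add: R_entry)
  qed
qed

lemma K_carrier: "K_mat t \<in> carrier_mat (3 * t) t" unfolding K_mat_def by simp
lemma K_entry: "s < 3 * t \<Longrightarrow> c < t \<Longrightarrow> K_mat t $$ (s, c) = ind (s mod t = c)"
  unfolding K_mat_def ind_def by simp

lemma sum3t: "(\<Sum>s<3*t. F s) = (\<Sum>u<3. \<Sum>v<t. F (u * t + v))" for F :: "nat \<Rightarrow> real" by (rule sum_mult_split)

lemma KtK: "transpose_mat (K_mat t) * K_mat t = 3 \<cdot>\<^sub>m 1\<^sub>m t"
proof (rule eq_matI)
  fix a c assume a: "a < dim_row (3 \<cdot>\<^sub>m 1\<^sub>m t :: real mat)" and c: "c < dim_col (3 \<cdot>\<^sub>m 1\<^sub>m t :: real mat)"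
  have "(transpose_mat (K_mat t) * K_mat t) $$ (a, c) = (\<Sum>s<3*t. ind (s mod t = a) * ind (s mod t = c))"
    using a c K_carrier by (simp add: scalar_prod_def K_entry lessThan_atLeast0)
  also have "\<dots> = (\<Sum>u<(3::nat). \<Sum>v<t. ind (v = a) * ind (v = c))" unfolding sum3t by simp
  also have "\<dots> = 3 * ind (a = c)" using a sum_ind_eqR'[of a t "\<lambda>v. ind (v = c)"] by simp
  finally show "(transpose_mat (K_mat t) * K_mat t) $$ (a, c) = (3 \<cdot>\<^sub>m 1\<^sub>m t) $$ (a, c)"
    using a c by (simp add: ind_def)
qed (use K_carrier in auto)

lemma mpK: "mp_inverse (transpose_mat (K_mat t) * K_mat t) = (1/3) \<cdot>\<^sub>m 1\<^sub>m t"
  unfolding KtK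
  by (rule mp_inverse_eqI[of _ t t]) (auto simp: penrose_def mult_smult_distrib[of _ t t _ t] mult_smult_assoc_mat[of _ t t _ t])

end

context des begin

definition cc :: "nat \<Rightarrow> nat \<Rightarrow> real" where "cc w u = ind (u = w) - 1/3"

lemma AK_entry: assumes r: "r < b * k" and a: "a < t"
  shows "(A_mat t b k d * K_mat t) $$ (r, a) = (\<Sum>u<3. hh u a r)"
proof -
  have "(A_mat t b k d * K_mat t) $$ (r, a) = (\<Sum>s<3*t. hh (s div t) (s mod t) r * ind (s mod t = a))"
    using r a A_carrier K_carrier by (simp add: scalar_prod_def K_entry A_entry lessThan_atLeast0)
  also have "\<dots> = (\<Sum>u<3. \<Sum>v<t. hh u v r * ind (v = a))" unfolding sum3t using t0 by simp
  also have "\<dots> = (\<Sum>u<3. hh u a r)"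
    using a by (intro sum.cong refl) (simp add: sum_ind_eqR'')
  finally show ?thesis .
qed

abbreviation X1 where "X1 \<equiv> A_mat t b k d * K_mat t * mp_inverse (transpose_mat (K_mat t) * K_mat t)"

lemma X1_carrier: "X1 \<in> carrier_mat (b * k) t"
  using A_carrier K_carrier unfolding mpK by auto

lemma X1_eq: "X1 = (1/3) \<cdot>\<^sub>m (A_mat t b k d * K_mat t)"
proof -
  have AK: "A_mat t b k d * K_mat t \<in> carrier_mat (b * k) t" using A_carrier K_carrier by auto
  show ?thesis unfolding mpK using mult_smult_distrib[OF AK one_carrier_mat, of "1/3"] right_mult_one_mat[OF AK] by simp
qed

lemma X1_entry: assumes "r < b * k" "a < t" shows "X1 $$ (r, a) = (\<Sum>u<3. 1/3 * hh u a r)"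
proof -
  have AK: "A_mat t b k d * K_mat t \<in> carrier_mat (b * k) t" using A_carrier K_carrier by auto
  have "X1 $$ (r, a) = 1/3 * (A_mat t b k d * K_mat t) $$ (r, a)"
    unfolding X1_eq using carrier_matD[OF AK] assms by simp
  also have "\<dots> = (\<Sum>u<3. 1/3 * hh u a r)" using AK_entry[OF assms] by (simp add: sum_distrib_left)
  finally show ?thesis .
qed

lemma M_carrier: "M_mat t \<in> carrier_mat (3 * t) (3 * t)"
  unfolding M_mat_def using K_carrier by auto

lemma M_entry: assumes p: "p < 3 * t" and q: "q < 3 * t"
  shows "M_mat t $$ (p, q) = ind (p = q) - 1/3 * ind (p mod t = q mod t)"
proof -
  have "(K_mat t * transpose_mat (K_mat t)) $$ (p, q) = (\<Sum>s<t. ind (p mod t = s) * ind (q mod t = s))"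
    using p q K_carrier by (simp add: scalar_prod_def K_entry lessThan_atLeast0)
  also have "\<dots> = ind (p mod t = q mod t)"
    using sum_ind_eq'[of "p mod t" t "\<lambda>s. ind (q mod t = s)"] t0 ind_sym[of "q mod t" "p mod t"] by simp
  finally have e: "(K_mat t * transpose_mat (K_mat t)) $$ (p, q) = ind (p mod t = q mod t)" .
  have "K_mat t * ((1/3) \<cdot>\<^sub>m 1\<^sub>m t) * transpose_mat (K_mat t) = (1/3) \<cdot>\<^sub>m (K_mat t * transpose_mat (K_mat t))"
    using K_carrier by (simp add: mult_smult_distrib[of _ "3*t" t _ t] mult_smult_assoc_mat[of _ "3*t" t _ "3*t"])
  then show ?thesis unfolding M_mat_def mpK using p q e K_carrier by (simp add: ind_def)
qed

abbreviation AM where "AM \<equiv> A_mat t b k d * M_mat t"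

lemma AM_carrier: "AM \<in> carrier_mat (b * k) (3 * t)" using A_carrier M_carrier by auto

lemma AM_entry: assumes r: "r < b * k" and q: "q < 3 * t"
  shows "AM $$ (r, q) = (\<Sum>u<3. cc (q div t) u * hh u (q mod t) r)"
proof -
  have qm: "q mod t < t" using t0 by simp
  have "AM $$ (r, q) = (\<Sum>s<3*t. hh (s div t) (s mod t) r * (ind (s = q) - 1/3 * ind (s mod t = q mod t)))"
    using r q A_carrier M_carrier by (simp add: scalar_prod_def M_entry A_entry lessThan_atLeast0)
  also have "\<dots> = (\<Sum>u<3. \<Sum>v<t. hh u v r * (ind (u * t + v = q) - 1/3 * ind (v = q mod t)))"
    unfolding sum3t using t0 by simp
  also have "\<dots> = (\<Sum>u<3. \<Sum>v<t. ind (q mod t = v) * (hh u v r * cc (q div t) u))"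
    by (intro sum.cong refl) (auto simp: divmod_eq cc_def ind_def)
  also have "\<dots> = (\<Sum>u<3. cc (q div t) u * hh u (q mod t) r)"
    using qm by (simp add: sum_ind_eq' mult.commute)
  finally show ?thesis .
qed

lemma B_carrier: "B_mat b k \<in> carrier_mat (b * k) b" unfolding B_mat_def by simp
lemma B_entry: "r < b * k \<Longrightarrow> c < b \<Longrightarrow> B_mat b k $$ (r, c) = ind (r div k = c)"
  unfolding B_mat_def ind_def by simp

abbreviation X2 where "X2 \<equiv> hcat AM (B_mat b k)"

lemma X2_carrier: "X2 \<in> carrier_mat (b * k) (3 * t + b)"
proof (rule carrier_matI)
  show "dim_row X2 = b * k" using AM_carrier by (simp add: hcat_dims A_dims)
  show "dim_col X2 = 3 * t + b" using M_carrier B_carrier by (simp add: hcat_dims carrier_matD)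
qed

lemma X2_entry: assumes r: "r < b * k" and q: "q < 3 * t + b"
  shows "X2 $$ (r, q) = (if q < 3 * t then (\<Sum>u<3. cc (q div t) u * hh u (q mod t) r)
     else ind (r div k = q - 3 * t))"
proof -
  have d1: "dim_row AM = b * k" "dim_col AM = 3 * t" "dim_col (B_mat b k) = b" using AM_carrier B_carrier by auto
  have "X2 $$ (r, q) = (if q < 3 * t then AM $$ (r, q) else B_mat b k $$ (r, q - 3 * t))"
    using hcat_entry[of r AM q "B_mat b k"] d1 r q by simp
  then show ?thesis using r q by (simp add: AM_entry B_entry)
qed

end

context des begin

definition Pi :: "nat \<Rightarrow> nat \<Rightarrow> real" where
  "Pi p q = (ind (p div t = q div t) - 1/3) * (ind (p mod t = q mod t) - 1 / real t)"

definition Dm :: "real \<Rightarrow> real \<Rightarrow> real mat" where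
  "Dm \<alpha> \<beta> = mat (3*t+b) (3*t+b) (\<lambda>(p, q). if p < 3*t \<and> q < 3*t then \<alpha> * Pi p q
      else if 3*t \<le> p \<and> p = q then \<beta> else 0)"

lemma Dm_carrier: "Dm \<alpha> \<beta> \<in> carrier_mat (3*t+b) (3*t+b)" unfolding Dm_def by simp

lemma Pi_sym: "Pi p q = Pi q p" unfolding Pi_def ind_def by auto

lemma Pi_idem: assumes p: "p < 3*t" and q: "q < 3*t"
  shows "(\<Sum>s<3*t. Pi p s * Pi s q) = Pi p q"
proof -
  have pd: "p div t < 3" "q div t < 3" using p q t0 by (auto simp: div_less_iff_less_mult mult.commute)
  have pm: "p mod t < t" "q mod t < t" using t0 by auto
  have "(\<Sum>s<3*t. Pi p s * Pi s q) = (\<Sum>u<3. \<Sum>v<t.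
      ((ind (p div t = u) - 1/3) * (ind (u = q div t) - 1/3)) *
      ((ind (p mod t = v) - 1/real t) * (ind (v = q mod t) - 1/real t)))"
    unfolding sum3t Pi_def using t0 by (intro sum.cong refl) (simp add: algebra_simps)
  also have "\<dots> = (\<Sum>u<3. (ind (p div t = u) - 1/3) * (ind (u = q div t) - 1/3)) *
      (\<Sum>v<t. (ind (p mod t = v) - 1/real t) * (ind (v = q mod t) - 1/real t))"
    by (simp add: sum_product)
  also have "\<dots> = Pi p q"
    using center_sum[OF pd] center_sum[OF pm] unfolding Pi_def by simp
  finally show ?thesis .
qed

lemma Dm_entry: "p < 3*t+b \<Longrightarrow> q < 3*t+b \<Longrightarrow> Dm \<alpha> \<beta> $$ (p, q) =
   (if p < 3*t \<and> q < 3*t then \<alpha> * Pi p q else if 3*t \<le> p \<and> p = q then \<beta> else 0)"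
  unfolding Dm_def by simp

lemma Dm_mult: "Dm \<alpha> \<beta> * Dm \<gamma> \<delta> = Dm (\<alpha> * \<gamma>) (\<beta> * \<delta>)"
proof (rule eq_matI)
  fix p q assume p: "p < dim_row (Dm (\<alpha> * \<gamma>) (\<beta> * \<delta>))" and q: "q < dim_col (Dm (\<alpha> * \<gamma>) (\<beta> * \<delta>))"
  then have p': "p < 3*t+b" and q': "q < 3*t+b" unfolding Dm_def by auto
  have "(Dm \<alpha> \<beta> * Dm \<gamma> \<delta>) $$ (p, q) = (\<Sum>s<3*t+b. Dm \<alpha> \<beta> $$ (p, s) * Dm \<gamma> \<delta> $$ (s, q))"
    using p' q' Dm_carrier[of \<alpha> \<beta>] Dm_carrier[of \<gamma> \<delta>] by (simp add: scalar_prod_def lessThan_atLeast0)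
  also have "\<dots> = (\<Sum>s<3*t. Dm \<alpha> \<beta> $$ (p, s) * Dm \<gamma> \<delta> $$ (s, q)) +
       (\<Sum>s<b. Dm \<alpha> \<beta> $$ (p, 3*t+s) * Dm \<gamma> \<delta> $$ (3*t+s, q))" by (rule sum_add_split)
  also have "\<dots> = Dm (\<alpha> * \<gamma>) (\<beta> * \<delta>) $$ (p, q)"
  proof (cases "p < 3*t")
    case True
    then have z: "(\<Sum>s<b. Dm \<alpha> \<beta> $$ (p, 3*t+s) * Dm \<gamma> \<delta> $$ (3*t+s, q)) = 0"
      using p' q' by (simp add: Dm_entry)
    show ?thesis
    proof (cases "q < 3*t")
      case True2: True
      have "(\<Sum>s<3*t. Dm \<alpha> \<beta> $$ (p, s) * Dm \<gamma> \<delta> $$ (s, q)) = (\<Sum>s<3*t. \<alpha> * \<gamma> * (Pi p s * Pi s q))"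
        using True True2 by (intro sum.cong refl) (simp add: Dm_entry)
      also have "\<dots> = \<alpha> * \<gamma> * Pi p q" using Pi_idem[OF True True2] by (simp add: sum_distrib_left[symmetric])
      finally show ?thesis using z True True2 by (simp add: Dm_entry)
    next
      case False
      have "(\<Sum>s<3*t. Dm \<alpha> \<beta> $$ (p, s) * Dm \<gamma> \<delta> $$ (s, q)) = 0"
        using False q' by (intro sum.neutral ballI) (simp add: Dm_entry)
      then show ?thesis using z True False p' q' by (simp add: Dm_entry)
    qed
  next
    case False
    have z: "(\<Sum>s<3*t. Dm \<alpha> \<beta> $$ (p, s) * Dm \<gamma> \<delta> $$ (s, q)) = 0"
      using False p' by (intro sum.neutral ballI) (simp add: Dm_entry)
    have "(\<Sum>s<b. Dm \<alpha> \<beta> $$ (p, 3*t+s) * Dm \<gamma> \<delta> $$ (3*t+s, q)) =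
          (\<Sum>s<b. if p - 3*t = s then (if p = q then \<beta> * \<delta> else 0) else 0)"
      using False p' q' by (intro sum.cong refl) (auto simp: Dm_entry)
    also have "\<dots> = (if p = q then \<beta> * \<delta> else 0)"
    proof -
      have "p - 3*t < b" using p' False by arith
      then show ?thesis by simp
    qed
    finally show ?thesis using z False p' q' by (simp add: Dm_entry)
  qed
  finally show "(Dm \<alpha> \<beta> * Dm \<gamma> \<delta>) $$ (p, q) = Dm (\<alpha> * \<gamma>) (\<beta> * \<delta>) $$ (p, q)" .
qed (auto simp: Dm_def)

lemma Dm_transpose: "transpose_mat (Dm \<alpha> \<beta>) = Dm \<alpha> \<beta>"
  by (rule eq_matI) (auto simp: Dm_def Pi_sym)

end

context des begin

lemma sum3: "(\<Sum>u<3. f u) = f 0 + f 1 + (f 2 :: real)" for f :: "nat \<Rightarrow> real"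
  by (simp add: numeral_3_eq_3 lessThan_Suc numeral_2_eq_2)

lemma cc_sum: "w < 3 \<Longrightarrow> (\<Sum>u<3. cc w u) = 0"
  unfolding sum3 cc_def by (auto simp: ind_def less_Suc_eq numeral_3_eq_3)

lemma GG: assumes "w1 < 3" "w2 < 3"
  shows "(\<Sum>u<3. \<Sum>v<3. cc w1 u * cc w2 v * gg u v a c) =
     real l * real t * ((ind (w1 = w2) - 1/3) * (ind (a = c) - 1/real t))"
  using assms t0 unfolding sum3 cc_def gg_def r0_def
  by (auto simp: ind_def less_Suc_eq numeral_3_eq_3 field_simps)

lemma GG0: assumes "w < 3"
  shows "(\<Sum>u<3. \<Sum>v<3. cc w u * (1/3) * gg u v a c) = 0"
  using assms t0 unfolding sum3 cc_def gg_def r0_def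
  by (auto simp: ind_def less_Suc_eq numeral_3_eq_3 field_simps)

lemma GG1: "(\<Sum>u<3. \<Sum>v<3. 1/3 * (1/3) * gg u v a c) =
   (if a = c then r0 / 3 else 2 * real l / 3)"
  unfolding sum3 gg_def by auto

lemma divlt: "p < 3 * t \<Longrightarrow> p div t < 3"
  using t0 by (simp add: div_less_iff_less_mult mult.commute)

lemma XtX_sum: "p < 3*t+b \<Longrightarrow> q < 3*t+b \<Longrightarrow>
   (transpose_mat X2 * X2) $$ (p, q) = (\<Sum>r<b*k. X2 $$ (r, p) * X2 $$ (r, q))"
  using X2_carrier by (simp add: scalar_prod_def lessThan_atLeast0)

lemma l_pos: "0 < l" using ltbk n_pos by (cases l) auto

lemma XtX: "transpose_mat X2 * X2 = Dm (real l * real t) (real k)"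
proof (rule eq_matI)
  fix p q assume "p < dim_row (Dm (real l * real t) (real k))" "q < dim_col (Dm (real l * real t) (real k))"
  then have p: "p < 3*t+b" and q: "q < 3*t+b" unfolding Dm_def by auto
  have am: "a mod t < t" for a using t0 by simp
  show "(transpose_mat X2 * X2) $$ (p, q) = Dm (real l * real t) (real k) $$ (p, q)"
  proof (cases "p < 3*t")
    case pt: True
    show ?thesis
    proof (cases "q < 3*t")
      case qt: True
      have "(transpose_mat X2 * X2) $$ (p, q) = (\<Sum>r<b*k. (\<Sum>u<3. cc (p div t) u * hh u (p mod t) r) *
          (\<Sum>v<3. cc (q div t) v * hh v (q mod t) r))"
        unfolding XtX_sum[OF p q] using p q pt qt by (intro sum.cong refl) (simp add: X2_entry)
      also have "\<dots> = (\<Sum>u<3. \<Sum>v<3. cc (p div t) u * cc (q div t) v *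
           (\<Sum>r<b*k. hh u (p mod t) r * hh v (q mod t) r))" by (rule bilin)
      also have "\<dots> = (\<Sum>u<3. \<Sum>v<3. cc (p div t) u * cc (q div t) v * gg u v (p mod t) (q mod t))"
        using am by (intro sum.cong refl) (simp add: G1)
      also have "\<dots> = Dm (real l * real t) (real k) $$ (p, q)"
        using GG[OF divlt[OF pt] divlt[OF qt]] p q pt qt by (simp add: Dm_entry Pi_def)
      finally show ?thesis .
    next
      case qt: False
      have "(transpose_mat X2 * X2) $$ (p, q) = (\<Sum>r<b*k. (\<Sum>u<3. cc (p div t) u * hh u (p mod t) r) *
          ind (r div k = q - 3*t))"
        unfolding XtX_sum[OF p q] using p q pt qt by (intro sum.cong refl) (simp add: X2_entry)
      also have "\<dots> = (\<Sum>u<3. cc (p div t) u * (\<Sum>r<b*k. hh u (p mod t) r * ind (r div k = q - 3*t)))"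
        by (rule lin)
      also have "\<dots> = (\<Sum>u<3. cc (p div t) u * (\<Sum>i<b. NN (p mod t) i * ind (i = q - 3*t)))"
        by (intro sum.cong refl) (simp add: G2[where F="\<lambda>i. ind (i = q - 3*t)"])
      also have "\<dots> = (\<Sum>u<3. cc (p div t) u) * (\<Sum>i<b. NN (p mod t) i * ind (i = q - 3*t))"
        by (simp add: sum_distrib_right)
      also have "\<dots> = 0" using cc_sum[OF divlt[OF pt]] by simp
      finally show ?thesis using p q pt qt by (simp add: Dm_entry)
    qed
  next
    case pt: False
    show ?thesis
    proof (cases "q < 3*t")
      case qt: True
      have "(transpose_mat X2 * X2) $$ (p, q) = (\<Sum>r<b*k. (\<Sum>u<3. cc (q div t) u * hh u (q mod t) r) *
          ind (r div k = p - 3*t))"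
        unfolding XtX_sum[OF p q] using p q pt qt by (intro sum.cong refl) (simp add: X2_entry mult.commute)
      also have "\<dots> = (\<Sum>u<3. cc (q div t) u * (\<Sum>r<b*k. hh u (q mod t) r * ind (r div k = p - 3*t)))"
        by (rule lin)
      also have "\<dots> = (\<Sum>u<3. cc (q div t) u * (\<Sum>i<b. NN (q mod t) i * ind (i = p - 3*t)))"
        by (intro sum.cong refl) (simp add: G2[where F="\<lambda>i. ind (i = p - 3*t)"])
      also have "\<dots> = (\<Sum>u<3. cc (q div t) u) * (\<Sum>i<b. NN (q mod t) i * ind (i = p - 3*t))"
        by (simp add: sum_distrib_right)
      also have "\<dots> = 0" using cc_sum[OF divlt[OF qt]] by simp
      finally show ?thesis using p q pt qt by (simp add: Dm_entry)
    next
      case qt: False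
      have "(transpose_mat X2 * X2) $$ (p, q) = (\<Sum>r<b*k. ind (r div k = p - 3*t) * ind (r div k = q - 3*t))"
        unfolding XtX_sum[OF p q] using p q pt qt by (intro sum.cong refl) (simp add: X2_entry)
      also have "\<dots> = real k * (\<Sum>i<b. ind (i = p - 3*t) * ind (i = q - 3*t))"
        by (rule G3[where F="\<lambda>i. ind (i = p - 3*t) * ind (i = q - 3*t)"])
      also have "\<dots> = real k * ind (p - 3*t = q - 3*t)"
        using sum_ind_eqR'[of "p - 3*t" b "\<lambda>i. ind (i = q - 3*t)"] p pt by simp
      finally have e: "(transpose_mat X2 * X2) $$ (p, q) = real k * ind (p - 3*t = q - 3*t)" .
      have "(p - 3*t = q - 3*t) = (p = q)" using pt qt by arith
      then show ?thesis using e p q pt qt by (simp add: Dm_entry ind_def)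
    qed
  qed
qed (use X2_carrier in \<open>auto simp: Dm_def\<close>)

abbreviation Zm where "Zm \<equiv> Dm (1 / (real l * real t)) (1 / real k)"

lemma penroseG: "penrose (transpose_mat X2 * X2) Zm"
  unfolding XtX penrose_def Dm_mult using l_pos t0 k0 by (simp add: Dm_transpose)

lemma mpG: "mp_inverse (transpose_mat X2 * X2) = Zm"
  using mp_inverse_eqI[OF _ Dm_carrier penroseG] X2_carrier by auto

lemma PX2: "X2 * Zm * transpose_mat X2 * X2 = X2"
  using proj_fix[OF X2_carrier Dm_carrier] penroseG unfolding penrose_def by simp

end

context des begin

definition Hm :: "real mat" where
  "Hm = mat (3*t+b) t (\<lambda>(q, a). if q < 3*t then 0 else 1 / real k * NN a (q - 3*t))"

lemma Hm_carrier: "Hm \<in> carrier_mat (3*t+b) t" unfolding Hm_def by simp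

abbreviation Y where "Y \<equiv> X2 * Hm"

lemma Y_carrier: "Y \<in> carrier_mat (b*k) t" using X2_carrier Hm_carrier by auto

lemma rdiv: "r < b * k \<Longrightarrow> r div k < b" by (simp add: less_mult_imp_div_less)

lemma Y_entry: assumes r: "r < b * k" and a: "a < t"
  shows "Y $$ (r, a) = 1 / real k * NN a (r div k)"
proof -
  have "Y $$ (r, a) = (\<Sum>q<3*t+b. X2 $$ (r, q) * Hm $$ (q, a))"
    using r a X2_carrier Hm_carrier by (simp add: scalar_prod_def lessThan_atLeast0)
  also have "\<dots> = (\<Sum>q<3*t. X2 $$ (r, q) * Hm $$ (q, a)) + (\<Sum>s<b. X2 $$ (r, 3*t+s) * Hm $$ (3*t+s, a))"
    by (rule sum_add_split)
  also have "(\<Sum>q<3*t. X2 $$ (r, q) * Hm $$ (q, a)) = 0"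
    using a by (intro sum.neutral ballI) (simp add: Hm_def)
  also have "(\<Sum>s<b. X2 $$ (r, 3*t+s) * Hm $$ (3*t+s, a)) = (\<Sum>s<b. ind (r div k = s) * (1 / real k * NN a s))"
    using r a by (intro sum.cong refl) (simp add: X2_entry Hm_def)
  also have "\<dots> = 1 / real k * NN a (r div k)" using rdiv[OF r] by (rule sum_ind_eq')
  finally show ?thesis by simp
qed

abbreviation Em where "Em \<equiv> X1 - Y"

lemma Em_carrier: "Em \<in> carrier_mat (b*k) t" by (rule minus_carrier_mat[OF Y_carrier])

lemma Em_entry: "r < b * k \<Longrightarrow> a < t \<Longrightarrow> Em $$ (r, a) = X1 $$ (r, a) - Y $$ (r, a)"
  using carrier_matD[OF Y_carrier] by simp

lemma XtE: "transpose_mat X2 * Em = 0\<^sub>m (3*t+b) t"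
proof (rule eq_matI)
  fix p a assume "p < dim_row (0\<^sub>m (3*t+b) t :: real mat)" "a < dim_col (0\<^sub>m (3*t+b) t :: real mat)"
  then have p: "p < 3*t+b" and a: "a < t" by auto
  have "(transpose_mat X2 * Em) $$ (p, a) = (\<Sum>r\<in>{0..<b*k}. X2 $$ (r, p) * Em $$ (r, a))"
    using p a carrier_matD[OF X2_carrier] carrier_matD[OF Em_carrier] by (simp add: scalar_prod_def)
  also have "\<dots> = (\<Sum>r<b*k. X2 $$ (r, p) * (X1 $$ (r, a) - Y $$ (r, a)))"
    using a by (simp add: lessThan_atLeast0 Em_entry)
  also have "\<dots> = (\<Sum>r<b*k. X2 $$ (r, p) * X1 $$ (r, a)) - (\<Sum>r<b*k. X2 $$ (r, p) * Y $$ (r, a))"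
    by (simp add: right_diff_distrib sum_subtractf)
  also have "\<dots> = 0"
  proof (cases "p < 3*t")
    case pt: True
    have am: "p mod t < t" using t0 by simp
    have "(\<Sum>r<b*k. X2 $$ (r, p) * X1 $$ (r, a)) =
        (\<Sum>r<b*k. (\<Sum>u<3. cc (p div t) u * hh u (p mod t) r) * (\<Sum>v<3. 1/3 * hh v a r))"
      using p a pt by (intro sum.cong refl) (simp add: X2_entry X1_entry)
    also have "\<dots> = (\<Sum>u<3. \<Sum>v<3. cc (p div t) u * (1/3) * (\<Sum>r<b*k. hh u (p mod t) r * hh v a r))"
      by (rule bilin)
    also have "\<dots> = (\<Sum>u<3. \<Sum>v<3. cc (p div t) u * (1/3) * gg u v (p mod t) a)"
      using am a by (intro sum.cong refl) (simp add: G1)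
    also have "\<dots> = 0" using GG0[OF divlt[OF pt]] by simp
    finally have e1: "(\<Sum>r<b*k. X2 $$ (r, p) * X1 $$ (r, a)) = 0" .
    have "(\<Sum>r<b*k. X2 $$ (r, p) * Y $$ (r, a)) =
        (\<Sum>r<b*k. (\<Sum>u<3. cc (p div t) u * hh u (p mod t) r) * (1 / real k * NN a (r div k)))"
      using p a pt by (intro sum.cong refl) (simp add: X2_entry Y_entry)
    also have "\<dots> = (\<Sum>u<3. cc (p div t) u * (\<Sum>r<b*k. hh u (p mod t) r * (1 / real k * NN a (r div k))))"
      by (rule lin)
    also have "\<dots> = (\<Sum>u<3. cc (p div t) u * (\<Sum>i<b. NN (p mod t) i * (1 / real k * NN a i)))"
      by (intro sum.cong refl) (simp only: G2[where F="\<lambda>i. 1 / real k * NN a i"])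
    also have "\<dots> = (\<Sum>u<3. cc (p div t) u) * (\<Sum>i<b. NN (p mod t) i * (1 / real k * NN a i))"
      by (simp add: sum_distrib_right)
    also have "\<dots> = 0" using cc_sum[OF divlt[OF pt]] by simp
    finally show ?thesis using e1 by simp
  next
    case pt: False
    define p' where "p' = p - 3*t"
    have p': "p' < b" using p pt unfolding p'_def by arith
    have "(\<Sum>r<b*k. X2 $$ (r, p) * X1 $$ (r, a)) = (\<Sum>r<b*k. (\<Sum>v<3. 1/3 * hh v a r) * ind (r div k = p'))"
      using p a pt unfolding p'_def by (intro sum.cong refl) (simp add: X2_entry X1_entry mult.commute)
    also have "\<dots> = (\<Sum>v<3. 1/3 * (\<Sum>r<b*k. hh v a r * ind (r div k = p')))" by (rule lin)
    also have "\<dots> = (\<Sum>v<(3::nat). 1/3 * (\<Sum>i<b. NN a i * ind (i = p')))"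
      by (intro sum.cong refl) (simp add: G2[where F="\<lambda>i. ind (i = p')"])
    also have "(\<Sum>i<b. NN a i * ind (i = p')) = NN a p'" using p' by (rule sum_ind_eqR'')
    also have "(\<Sum>v<(3::nat). 1/3 * NN a p') = NN a p'" by simp
    finally have e1: "(\<Sum>r<b*k. X2 $$ (r, p) * X1 $$ (r, a)) = NN a p'" .
    have "(\<Sum>r<b*k. X2 $$ (r, p) * Y $$ (r, a)) = (\<Sum>r<b*k. ind (r div k = p') * (1 / real k * NN a (r div k)))"
      using p a pt unfolding p'_def by (intro sum.cong refl) (simp add: X2_entry Y_entry)
    also have "\<dots> = real k * (\<Sum>i<b. ind (i = p') * (1 / real k * NN a i))"
      by (rule G3[where F="\<lambda>i. ind (i = p') * (1 / real k * NN a i)"])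
    also have "(\<Sum>i<b. ind (i = p') * (1 / real k * NN a i)) = 1 / real k * NN a p'"
      using p' by (rule sum_ind_eqR')
    finally have e2: "(\<Sum>r<b*k. X2 $$ (r, p) * Y $$ (r, a)) = NN a p'" using k0 by simp
    show ?thesis using e1 e2 by simp
  qed
  finally show "(transpose_mat X2 * Em) $$ (p, a) = 0\<^sub>m (3*t+b) t $$ (p, a)" using p a by simp
qed (use X2_carrier Em_carrier in auto)

abbreviation Pm where "Pm \<equiv> X2 * Zm * transpose_mat X2"

lemma Pm_carrier: "Pm \<in> carrier_mat (b*k) (b*k)" using X2_carrier Dm_carrier by auto

lemma proj_eq: "proj_mat X2 = Pm" unfolding proj_mat_def mpG ..

lemma PE: "Pm * Em = 0\<^sub>m (b*k) t"
proof -
  have "Pm * Em = (X2 * Zm) * (transpose_mat X2 * Em)"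
    by (rule assoc_mult_mat[of _ "b*k" "3*t+b" _ "b*k" _ t]) (use X2_carrier Dm_carrier Em_carrier in auto)
  also have "\<dots> = 0\<^sub>m (b*k) t" unfolding XtE using X2_carrier Dm_carrier by auto
  finally show ?thesis .
qed

lemma PY: "Pm * Y = Y"
proof -
  have "Pm * Y = (Pm * X2) * Hm"
    by (rule assoc_mult_mat[symmetric, of _ "b*k" "b*k" _ "3*t+b" _ t]) (use X2_carrier Pm_carrier Hm_carrier in auto)
  then show ?thesis using PX2 by simp
qed

lemma X1_split: "X1 = Y + Em"
  by (rule eq_matI) (use carrier_matD[OF X1_carrier] carrier_matD[OF Y_carrier] in auto)

lemma pp_carrier: "proj_perp X2 \<in> carrier_mat (b*k) (b*k)"
proof -
  have dr: "dim_row X2 = b * k" using X2_carrier by auto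
  show ?thesis unfolding proj_perp_def proj_eq dr by (rule minus_carrier_mat[OF Pm_carrier])
qed

lemma ppX1: "proj_perp X2 * X1 = Em"
proof -
  have dr: "dim_row X2 = b * k" using X2_carrier by auto
  have "Pm * X1 = Pm * Y + Pm * Em"
    unfolding X1_split[symmetric] by (subst X1_split) (rule mult_add_distrib_mat[of _ "b*k" "b*k"], use Pm_carrier Y_carrier Em_carrier in auto)
  also have "\<dots> = Y" using PY PE Y_carrier by simp
  finally have PX1: "Pm * X1 = Y" .
  have "proj_perp X2 * X1 = 1\<^sub>m (b*k) * X1 - Pm * X1"
    unfolding proj_perp_def proj_eq dr
    by (rule minus_mult_distrib_mat[of _ "b*k" "b*k"]) (use Pm_carrier X1_carrier in auto)
  also have "\<dots> = Em" using PX1 left_mult_one_mat[OF X1_carrier] by simp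
  finally show ?thesis .
qed

lemma info_eq: "info_mat t b k d = transpose_mat X1 * Em"
proof -
  have "info_mat t b k d = transpose_mat X1 * proj_perp X2 * X1" unfolding info_mat_def Let_def ..
  also have "\<dots> = transpose_mat X1 * (proj_perp X2 * X1)"
    by (rule assoc_mult_mat[of _ t "b*k" _ "b*k" _ t]) (use X1_carrier pp_carrier in auto)
  finally show ?thesis unfolding ppX1 .
qed

lemma ltbk_real: "real l * (real t * (real t - 1)) = real b * real k"
proof -
  have "real (l * (t * (t - 1))) = real (b * k)" using ltbk by simp
  then show ?thesis using t1 by (simp add: of_nat_diff)
qed

lemma info_final: "info_mat t b k d =
    (real b * (real k - 3) / (3 * (real t - 1))) \<cdot>\<^sub>m (1\<^sub>m t - (1 / real t) \<cdot>\<^sub>m J_mat t)"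
proof (rule eq_matI)
  fix a c assume ac: "a < dim_row ((real b * (real k - 3) / (3 * (real t - 1))) \<cdot>\<^sub>m (1\<^sub>m t - (1 / real t) \<cdot>\<^sub>m J_mat t))"
     "c < dim_col ((real b * (real k - 3) / (3 * (real t - 1))) \<cdot>\<^sub>m (1\<^sub>m t - (1 / real t) \<cdot>\<^sub>m J_mat t))"
  then have a: "a < t" and c: "c < t" by (auto simp: J_mat_def)
  have "info_mat t b k d $$ (a, c) = (\<Sum>r\<in>{0..<b*k}. X1 $$ (r, a) * Em $$ (r, c))"
    unfolding info_eq using a c carrier_matD[OF X1_carrier] carrier_matD[OF Em_carrier] by (simp add: scalar_prod_def)
  also have "\<dots> = (\<Sum>r<b*k. X1 $$ (r, a) * (X1 $$ (r, c) - Y $$ (r, c)))"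
    using c by (simp add: lessThan_atLeast0 Em_entry)
  also have "\<dots> = (\<Sum>r<b*k. X1 $$ (r, a) * X1 $$ (r, c)) - (\<Sum>r<b*k. X1 $$ (r, a) * Y $$ (r, c))"
    by (simp add: right_diff_distrib sum_subtractf)
  also have "(\<Sum>r<b*k. X1 $$ (r, a) * X1 $$ (r, c)) = (if a = c then r0 / 3 else 2 * real l / 3)"
  proof -
    have "(\<Sum>r<b*k. X1 $$ (r, a) * X1 $$ (r, c)) =
        (\<Sum>r<b*k. (\<Sum>u<3. 1/3 * hh u a r) * (\<Sum>v<3. 1/3 * hh v c r))"
      using a c by (intro sum.cong refl) (simp add: X1_entry)
    also have "\<dots> = (\<Sum>u<3. \<Sum>v<3. 1/3 * (1/3) * (\<Sum>r<b*k. hh u a r * hh v c r))"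
      by (rule bilin)
    also have "\<dots> = (\<Sum>u<3. \<Sum>v<3. 1/3 * (1/3) * gg u v a c)"
      using a c by (intro sum.cong refl) (simp add: G1)
    finally show ?thesis using GG1 by simp
  qed
  also have "(\<Sum>r<b*k. X1 $$ (r, a) * Y $$ (r, c)) = 1 / real k * (if a = c then r0 else real l * (real k - 1))"
  proof -
    have "(\<Sum>r<b*k. X1 $$ (r, a) * Y $$ (r, c)) =
        (\<Sum>r<b*k. (\<Sum>u<3. 1/3 * hh u a r) * (1 / real k * NN c (r div k)))"
      using a c by (intro sum.cong refl) (simp add: X1_entry Y_entry)
    also have "\<dots> = (\<Sum>u<3. 1/3 * (\<Sum>r<b*k. hh u a r * (1 / real k * NN c (r div k))))"
      by (rule lin)
    also have "\<dots> = (\<Sum>u<(3::nat). 1/3 * (\<Sum>i<b. NN a i * (1 / real k * NN c i)))"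
      by (intro sum.cong refl) (simp only: G2[where F="\<lambda>i. 1 / real k * NN c i"])
    also have "\<dots> = (\<Sum>i<b. NN a i * (1 / real k * NN c i))" by simp
    also have "\<dots> = 1 / real k * (\<Sum>i<b. NN a i * NN c i)" by (simp add: sum_distrib_left mult_ac)
    also have "(\<Sum>i<b. NN a i * NN c i) = (if a = c then r0 else real l * (real k - 1))"
      using rep[OF a] lam[OF a c] by (cases "a = c") (simp_all add: NN_sq)
    finally show ?thesis .
  qed
  also have "(if a = c then r0 / 3 else 2 * real l / 3) - 1 / real k * (if a = c then r0 else real l * (real k - 1))
      = (real b * (real k - 3) / (3 * (real t - 1))) * ((if a = c then 1 else 0) - 1 / real t)"
  proof -
    have t1r: "real t - 1 > 0" using t1 by simp
    have kr: "real k > 0" using k0 by simp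
    have bdef: "real b = real l * (real t * (real t - 1)) / real k" using ltbk_real kr by (simp add: field_simps)
    show ?thesis unfolding bdef r0_def using t1r kr t0 by (auto simp: field_simps)
  qed
  finally show "info_mat t b k d $$ (a, c) =
      ((real b * (real k - 3) / (3 * (real t - 1))) \<cdot>\<^sub>m (1\<^sub>m t - (1 / real t) \<cdot>\<^sub>m J_mat t)) $$ (a, c)"
    using a c by (simp add: J_mat_def)
next
  show "dim_row (info_mat t b k d) = dim_row ((real b * (real k - 3) / (3 * (real t - 1))) \<cdot>\<^sub>m (1\<^sub>m t - (1 / real t) \<cdot>\<^sub>m J_mat t))"
    unfolding info_eq using carrier_matD[OF X1_carrier] by (simp add: J_mat_def)
  show "dim_col (info_mat t b k d) = dim_col ((real b * (real k - 3) / (3 * (real t - 1))) \<cdot>\<^sub>m (1\<^sub>m t - (1 / real t) \<cdot>\<^sub>m J_mat t))"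
    unfolding info_eq using carrier_matD[OF Em_carrier] by (simp add: J_mat_def)
qed

end

theorem lemma5:
  fixes t b k l :: nat and d :: "nat \<Rightarrow> nat \<Rightarrow> nat"
  assumes "0 < t" "0 < b" "0 < k" "4 \<le> k" "k \<le> t"
    and "l * (t * (t - 1)) = b * k"
    and "CNBD2 t b k l d"
  shows "info_mat t b k d =
    (real b * (real k - 3) / (3 * (real t - 1))) \<cdot>\<^sub>m (1\<^sub>m t - (1 / real t) \<cdot>\<^sub>m J_mat t)"
  proof -
  interpret des t b k l d by (rule des.intro) (use assms in auto)
  show ?thesis by (rule info_final)
qed

end
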